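(* Let $(\mathcal P,\mathcal M,p)$ be an operational theory containing binary measurements $M_1,M_2,M_3$ (outcomes $X_i\in\{0,1\}$), and two families of four-outcome measurements $M_{ij}$ and $M'_{ij}$, $(ij)\in\{(12),(23),(31)\}$, with outcomes $(X_i,X_j)$, such that each is a joint measurement of $M_i$ and $M_j$: $M_1^{(2)}\simeq M_1^{(3)}\simeq M_1$, $M_2^{(1)}\simeq M_2^{(3)}\simeq M_2$, $M_3^{(1)}\simeq M_3^{(2)}\simeq M_3$, and likewise $M_i'^{(j)}\simeq M_i$ for all these pairs. Let $P_*,P_*^\perp,P_1,P_1^\perp,P_2,P_2^\perp,P_3,P_3^\perp\in\mathcal P$ and let $P_x^{(\mathrm{ave})}$ be the preparation implementing $P_x$ or $P_x^\perp$ with probability $\tfrac12$ each ($x\in\{1,2,3,*\}$); suppose $P_*^{(\mathrm{ave})}\simeq P_1^{(\mathrm{ave})}\simeq P_2^{(\mathrm{ave})}\simeq P_3^{(\mathrm{ave})}$. Define $p(\mathrm{anti}|M_*,P)=\tfrac13\sum_{(ij)}p(X_i\neq X_j|M_{ij},P)$, similarly $p(\mathrm{anti}|M'_*,P)$ with $M'_{ij}$, and $\eta_{\mathrm{ave}}=\tfrac16\sum_{i=1}^3(\eta(M_i,P_i)+\eta(M_i,P_i^\perp))$. If the theory admits an ontological model that is both measurement and preparation noncontextual, then $$p(\mathrm{anti}|M_*,P_* )+p(\mathrm{anti}|M'_*,P_*^\perp)\le2\Big(1-\tfrac13\eta_{\mathrm{ave}}\Big).$$ Moreover, using only the operational equivalences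 involving the $M_{ij}$ (not the $M'_{ij}$) together with the preparation equivalences, such a theory must also satisfy $$p(\mathrm{anti}|M_*,P_* )+p(\mathrm{anti}|M_*,P_*^\perp)\le 2\Big(1-\tfrac13\eta_{\mathrm{ave}}\Big)\quad\text{and}\quad p(\mathrm{anti}|M_*,P_* )\le\tfrac23(2-\eta_{\mathrm{ave}}).$$
   Context: Operational theory: preparations $\mathcal P$, measurements $\mathcal M$ with finite outcome sets, probabilities $p(X|M,P)$. Ontological model: ontic states $\Lambda$, distributions $\mu(\cdot|P)$, response functions $\xi(X|M,\lambda)$ (probability distributions over outcomes) with $p(X|M,P)=\sum_\lambda\xi(X|M,\lambda)\mu(\lambda|P)$; a mixture of preparations is represented by the corresponding mixture of distributions, and a coarse-graining of outcomes by summing response functions. $M_i^{(j)}$ denotes the binary measurement obtained from $M_{ij}$ by discarding $X_j$ (coarse-graining), i.e. $p(X_i|M_i^{(j)},P)=\sum_{X_j}p(X_i,X_j|M_{ij},P)$; $M_i'^{(j)}$ similarly from $M'_{ij}$. Two measurements are operationally equivalent ($\simeq$) if they give the same outcome probabilities for every preparation; $P\simeq P'$ if they give the same outcome probabilities for every measurement. Measurement noncontextuality: operationally equivalent measurement events have equal response functions for every $\lambda$; preparation noncontextuality: $P\simeq P'\Rightarrow\mu(\cdot|P)=\mu(\cdot|P')$. The predictability is $\eta(M,P)=2\max_{X\in\{0,1\}}p(X|M,P)-1$. Outcome determinism is not assumed. *)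

theory Defs
  imports "HOL-Probability.Probability"
begin

text \<open>Outcomes are encoded as natural-number
lists: a binary measurement has outcomes [0] and [1]; a four-outcome joint
measurement M_ij has outcomes [X_i, X_j].\<close>

definition op_theory :: "('m \<Rightarrow> nat list set) \<Rightarrow> ('m \<Rightarrow> 'p \<Rightarrow> nat list \<Rightarrow> real) \<Rightarrow> bool" where
  "op_theory Out p \<longleftrightarrow>
     (\<forall>M. finite (Out M) \<and> Out M \<noteq> {}) \<and>
     (\<forall>M P. (\<forall>X\<in>Out M. 0 \<le> p M P X) \<and> (\<Sum>X\<in>Out M. p M P X) = 1)"

definition ev_prob :: "('m \<Rightarrow> 'p \<Rightarrow> nat list \<Rightarrow> real) \<Rightarrow> 'm \<Rightarrow> 'p \<Rightarrow> nat list set \<Rightarrow> real" where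
  "ev_prob p M P S = (\<Sum>X\<in>S. p M P X)"

definition meas_event_equiv ::
  "('m \<Rightarrow> nat list set) \<Rightarrow> ('m \<Rightarrow> 'p \<Rightarrow> nat list \<Rightarrow> real) \<Rightarrow> 'm \<Rightarrow> nat list set \<Rightarrow> 'm \<Rightarrow> nat list set \<Rightarrow> bool" where
  "meas_event_equiv Out p M S M' S' \<longleftrightarrow>
     S \<subseteq> Out M \<and> S' \<subseteq> Out M' \<and> (\<forall>P. ev_prob p M P S = ev_prob p M' P S')"

definition prep_equiv :: "('m \<Rightarrow> nat list set) \<Rightarrow> ('m \<Rightarrow> 'p \<Rightarrow> nat list \<Rightarrow> real) \<Rightarrow> 'p \<Rightarrow> 'p \<Rightarrow> bool" where
  "prep_equiv Out p P P' \<longleftrightarrow> (\<forall>M. \<forall>X\<in>Out M. p M P X = p M P' X)"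

definition ont_model ::
  "('m \<Rightarrow> nat list set) \<Rightarrow> ('m \<Rightarrow> 'p \<Rightarrow> nat list \<Rightarrow> real) \<Rightarrow> ('p \<Rightarrow> 'l pmf) \<Rightarrow> ('m \<Rightarrow> 'l \<Rightarrow> nat list \<Rightarrow> real) \<Rightarrow> bool" where
  "ont_model Out p \<mu> \<xi> \<longleftrightarrow>
     (\<forall>M l. (\<forall>X\<in>Out M. 0 \<le> \<xi> M l X) \<and> (\<Sum>X\<in>Out M. \<xi> M l X) = 1) \<and>
     (\<forall>M P. \<forall>X\<in>Out M. p M P X = measure_pmf.expectation (\<mu> P) (\<lambda>l. \<xi> M l X))"

text \<open>Measurement noncontextuality: operationally equivalent measurement events
(coarse-grainings represented by summing response functions) have equal
response functions for every ontic state.\<close>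
definition meas_noncontextual ::
  "('m \<Rightarrow> nat list set) \<Rightarrow> ('m \<Rightarrow> 'p \<Rightarrow> nat list \<Rightarrow> real) \<Rightarrow> ('m \<Rightarrow> 'l \<Rightarrow> nat list \<Rightarrow> real) \<Rightarrow> bool" where
  "meas_noncontextual Out p \<xi> \<longleftrightarrow>
     (\<forall>M S M' S'. meas_event_equiv Out p M S M' S' \<longrightarrow>
        (\<forall>l. (\<Sum>X\<in>S. \<xi> M l X) = (\<Sum>X\<in>S'. \<xi> M' l X)))"

definition prep_noncontextual ::
  "('m \<Rightarrow> nat list set) \<Rightarrow> ('m \<Rightarrow> 'p \<Rightarrow> nat list \<Rightarrow> real) \<Rightarrow> ('p \<Rightarrow> 'l pmf) \<Rightarrow> bool" where
  "prep_noncontextual Out p \<mu> \<longleftrightarrow> (\<forall>P P'. prep_equiv Out p P P' \<longrightarrow> \<mu> P = \<mu> P')"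

definition pairs3 :: "(nat \<times> nat) set" where
  "pairs3 = {(1,2),(2,3),(3,1)}"

definition p_anti :: "('m \<Rightarrow> 'p \<Rightarrow> nat list \<Rightarrow> real) \<Rightarrow> (nat \<Rightarrow> nat \<Rightarrow> 'm) \<Rightarrow> 'p \<Rightarrow> real" where
  "p_anti p Mj P = (1/3) * (\<Sum>(i,j)\<in>pairs3. p (Mj i j) P [0,1] + p (Mj i j) P [1,0])"

definition predictability :: "('m \<Rightarrow> 'p \<Rightarrow> nat list \<Rightarrow> real) \<Rightarrow> 'm \<Rightarrow> 'p \<Rightarrow> real" where
  "predictability p M P = 2 * max (p M P [0]) (p M P [1]) - 1"

definition eta_ave :: "('m \<Rightarrow> 'p \<Rightarrow> nat list \<Rightarrow> real) \<Rightarrow> (nat \<Rightarrow> 'm) \<Rightarrow> (nat \<Rightarrow> 'p) \<Rightarrow> (nat \<Rightarrow> 'p) \<Rightarrow> real" where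
  "eta_ave p M P Pp = (1/6) * (\<Sum>i\<in>{1,2,3}. predictability p (M i) (P i) + predictability p (M i) (Pp i))"

text \<open>M_ij is a joint measurement of M_i and M_j: outcome [X_i,X_j]; discarding
X_j gives M_i and discarding X_i gives M_j (operational equivalence, unfolded).\<close>
definition joint_meas ::
  "('m \<Rightarrow> nat list set) \<Rightarrow> ('m \<Rightarrow> 'p \<Rightarrow> nat list \<Rightarrow> real) \<Rightarrow> 'm \<Rightarrow> 'm \<Rightarrow> 'm \<Rightarrow> bool" where
  "joint_meas Out p Mij Mi Mj \<longleftrightarrow>
     (\<forall>P. \<forall>x\<in>{0,1}.
        (\<Sum>y\<in>{0,1}. p Mij P [x,y]) = p Mi P [x] \<and>
        (\<Sum>y\<in>{0,1}. p Mij P [y,x]) = p Mj P [x])"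

end

theory Submission
  imports Defs
begin

lemma pmf_int_bound:
  fixes f :: "'l \<Rightarrow> real"
  assumes "\<And>l. \<bar>f l\<bar> \<le> B"
  shows "integrable (measure_pmf q) f"
  by (rule measure_pmf.integrable_const_bound[where B=B]) (auto simp: assms)

lemma pmf_mix_exp:
  fixes f :: "'l \<Rightarrow> real"
  assumes "\<And>l. \<bar>f l\<bar> \<le> B"
    and mix: "\<forall>l. pmf r l = (1/2) * pmf q1 l + (1/2) * pmf q2 l"
  shows "measure_pmf.expectation r f = (1/2) * measure_pmf.expectation q1 f + (1/2) * measure_pmf.expectation q2 f"
proof -
  have i: "integrable (measure_pmf q) f" for q :: "'l pmf" using pmf_int_bound assms(1) by blast
  have ic: "integrable (count_space UNIV) (\<lambda>x. pmf q x * f x)" for q :: "'l pmf"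
    using i[of q] unfolding measure_pmf_eq_density
    by (subst (asm) integrable_density) auto
  have e: "measure_pmf.expectation q f = (\<integral>x. pmf q x * f x \<partial>count_space UNIV)" for q :: "'l pmf"
    unfolding measure_pmf_eq_density by (subst integral_density) auto
  have "measure_pmf.expectation r f = (\<integral>x. (1/2) * (pmf q1 x * f x) + (1/2) * (pmf q2 x * f x) \<partial>count_space UNIV)"
    unfolding e using mix by (simp add: algebra_simps)
  also have "\<dots> = (1/2) * (\<integral>x. pmf q1 x * f x \<partial>count_space UNIV) + (1/2) * (\<integral>x. pmf q2 x * f x \<partial>count_space UNIV)"
    using ic[of q1] ic[of q2] by (simp add: integral_add integrable_mult_right)
  finally show ?thesis unfolding e .
qed

lemma pmf_exp_mono:
  fixes f g :: "'l \<Rightarrow> real"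
  assumes "\<And>l. \<bar>f l\<bar> \<le> B" "\<And>l. \<bar>g l\<bar> \<le> C" "\<And>l. f l \<le> g l"
  shows "measure_pmf.expectation q f \<le> measure_pmf.expectation q g"
  by (rule integral_mono) (auto intro: pmf_int_bound assms)

lemma pmf_exp_lin:
  fixes f :: "'l \<Rightarrow> real"
  assumes "\<And>l. \<bar>f l\<bar> \<le> B"
  shows "measure_pmf.expectation q (\<lambda>l. c + d * f l) = c + d * measure_pmf.expectation q f"
proof -
  have "integrable (measure_pmf q) f" using pmf_int_bound assms by blast
  then show ?thesis by (simp add: integral_add)
qed

lemma perlam:
  fixes a1 a2 a3 t12 t23 t31 :: real
  assumes "0 \<le> a1" "a1 \<le> 1" "0 \<le> a2" "a2 \<le> 1" "0 \<le> a3" "a3 \<le> 1"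
   "t12 \<le> a1 + a2" "t12 \<le> 2 - a1 - a2"
   "t23 \<le> a2 + a3" "t23 \<le> 2 - a2 - a3"
   "t31 \<le> a3 + a1" "t31 \<le> 2 - a3 - a1"
  shows "3*(t12 + t23 + t31) \<le> 9 - (\<bar>2*a1-1\<bar> + \<bar>2*a2-1\<bar> + \<bar>2*a3-1\<bar>)"
  using assms by (cases "a1 \<ge> 1/2"; cases "a2 \<ge> 1/2"; cases "a3 \<ge> 1/2"; simp add: abs_real_def; smt (verit))

lemma marg:
  fixes \<xi> :: "'m \<Rightarrow> 'l \<Rightarrow> nat list \<Rightarrow> real"
  assumes MNC: "meas_noncontextual Out p \<xi>"
    and four: "Out N = {[x,y] | x y. x \<in> {0,1} \<and> y \<in> {0,1}}"
    and bi: "Out Mi = {[0],[1]}" and bk: "Out Mk = {[0],[1]}"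
    and jm: "joint_meas Out p N Mi Mk"
    and x: "x \<in> {0,1}"
  shows "\<xi> N l [x,0] + \<xi> N l [x,1] = \<xi> Mi l [x]"
    and "\<xi> N l [0,x] + \<xi> N l [1,x] = \<xi> Mk l [x]"
proof -
  have "meas_event_equiv Out p N {[x,0],[x,1]} Mi {[x]}"
    unfolding meas_event_equiv_def ev_prob_def using four bi x jm
    by (auto simp: joint_meas_def)
  then show "\<xi> N l [x,0] + \<xi> N l [x,1] = \<xi> Mi l [x]"
    using MNC unfolding meas_noncontextual_def by fastforce
  have "meas_event_equiv Out p N {[0,x],[1,x]} Mk {[x]}"
    unfolding meas_event_equiv_def ev_prob_def using four bk x jm
    by (auto simp: joint_meas_def)
  then show "\<xi> N l [0,x] + \<xi> N l [1,x] = \<xi> Mk l [x]"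
    using MNC unfolding meas_noncontextual_def by fastforce
qed

lemma xi_bnd:
  assumes thy: "op_theory Out p" and model: "ont_model Out p \<mu> \<xi>" and X: "X \<in> Out N"
  shows "0 \<le> \<xi> N l X \<and> \<xi> N l X \<le> 1"
proof -
  have fin: "finite (Out N)" using thy by (simp add: op_theory_def)
  have nn: "\<forall>Y\<in>Out N. 0 \<le> \<xi> N l Y" and s: "(\<Sum>Y\<in>Out N. \<xi> N l Y) = 1"
    using model by (auto simp: ont_model_def)
  have "\<xi> N l X \<le> (\<Sum>Y\<in>Out N. \<xi> N l Y)"
    by (rule member_le_sum) (use X nn fin in auto)
  then show ?thesis using s nn X by auto
qed

theorem mainTheorem9:
  fixes Out :: "'m \<Rightarrow> nat list set"
    and p :: "'m \<Rightarrow> 'p \<Rightarrow> nat list \<Rightarrow> real"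
    and M :: "nat \<Rightarrow> 'm"
    and Mj Mj' :: "nat \<Rightarrow> nat \<Rightarrow> 'm"
    and P Pp Pave :: "nat \<Rightarrow> 'p"
    and \<mu> :: "'p \<Rightarrow> 'l pmf"
    and \<xi> :: "'m \<Rightarrow> 'l \<Rightarrow> nat list \<Rightarrow> real"
  assumes thy: "op_theory Out p"
    and binary: "\<And>i. i \<in> {1,2,3} \<Longrightarrow> Out (M i) = {[0],[1]}"
    and four: "\<And>i j. (i,j) \<in> pairs3 \<Longrightarrow> Out (Mj i j) = {[x,y] | x y. x \<in> {0,1} \<and> y \<in> {0,1}}"
    and four': "\<And>i j. (i,j) \<in> pairs3 \<Longrightarrow> Out (Mj' i j) = {[x,y] | x y. x \<in> {0,1} \<and> y \<in> {0,1}}"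
    and joint: "\<And>i j. (i,j) \<in> pairs3 \<Longrightarrow> joint_meas Out p (Mj i j) (M i) (M j)"
    and ave_op: "\<And>x. x \<in> {0,1,2,3} \<Longrightarrow>
        \<forall>N. \<forall>X\<in>Out N. p N (Pave x) X = (1/2) * p N (P x) X + (1/2) * p N (Pp x) X"
    and ave_equiv: "\<And>x. x \<in> {1,2,3} \<Longrightarrow> prep_equiv Out p (Pave 0) (Pave x)"
    and model: "ont_model Out p \<mu> \<xi>"
    and model_mix: "\<And>x. x \<in> {0,1,2,3} \<Longrightarrow>
        \<forall>l. pmf (\<mu> (Pave x)) l = (1/2) * pmf (\<mu> (P x)) l + (1/2) * pmf (\<mu> (Pp x)) l"
    and MNC: "meas_noncontextual Out p \<xi>"
    and PNC: "prep_noncontextual Out p \<mu>"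
  shows "((\<forall>i j. (i,j) \<in> pairs3 \<longrightarrow> joint_meas Out p (Mj' i j) (M i) (M j)) \<longrightarrow>
            p_anti p Mj (P 0) + p_anti p Mj' (Pp 0) \<le> 2 * (1 - (1/3) * eta_ave p M P Pp))
       \<and> p_anti p Mj (P 0) + p_anti p Mj (Pp 0) \<le> 2 * (1 - (1/3) * eta_ave p M P Pp)
       \<and> p_anti p Mj (P 0) \<le> (2/3) * (2 - eta_ave p M P Pp)"
proof -
  let ?F = "{[x,y] | x y. x \<in> {0,1} \<and> y \<in> {0,1::nat}}"
  have bnd: "\<And>N l X. X \<in> Out N \<Longrightarrow> 0 \<le> \<xi> N l X \<and> \<xi> N l X \<le> 1"
    using xi_bnd[OF thy model] by blast
  have pE: "\<And>N q X. X \<in> Out N \<Longrightarrow> p N q X = measure_pmf.expectation (\<mu> q) (\<lambda>l. \<xi> N l X)"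
    using model by (simp add: ont_model_def)
  have F01: "[0,1] \<in> ?F" and F10: "[1,0] \<in> ?F" by auto
  have pr3: "\<And>i j. (i,j) \<in> pairs3 \<Longrightarrow> i \<in> {1,2,3} \<and> j \<in> {1,2,3}"
    by (auto simp: pairs3_def)
  define a where "a i l = \<xi> (M i) l [0]" for i l
  have a_bnd: "0 \<le> a i l \<and> a i l \<le> 1" if "i \<in> {1,2,3}" for i l
    using bnd[of "[0]" "M i" l] binary[OF that] by (simp add: a_def)
  have a1: "\<xi> (M i) l [1] = 1 - a i l" if "i \<in> {1,2,3}" for i l
  proof -
    have "(\<Sum>X\<in>Out (M i). \<xi> (M i) l X) = 1" using model by (simp add: ont_model_def)
    then show ?thesis using binary[OF that] by (simp add: a_def)
  qed
  define g where "g l = (\<Sum>i\<in>{1,2,3::nat}. \<bar>2 * a i l - 1\<bar>)" for l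
  define A where "A N l = (\<Sum>(i,j)\<in>pairs3. \<xi> (N i j) l [0,1] + \<xi> (N i j) l [1,0])"
    for N :: "nat \<Rightarrow> nat \<Rightarrow> 'm" and l
  have b_bnd: "\<bar>2 * a i l - 1\<bar> \<le> 1" if "i \<in> {1,2,3}" for i l
    using a_bnd[OF that, of l] by auto
  have g_bnd: "0 \<le> g l \<and> g l \<le> 3" for l
    using b_bnd[of 1 l] b_bnd[of 2 l] b_bnd[of 3 l] by (simp add: g_def)
  have pairb: "\<xi> (N i j) l [0,1] + \<xi> (N i j) l [1,0] \<le> a i l + a j l \<and>
               \<xi> (N i j) l [0,1] + \<xi> (N i j) l [1,0] \<le> 2 - a i l - a j l"
    if ij: "(i,j) \<in> pairs3" and fo: "Out (N i j) = ?F" and jm: "joint_meas Out p (N i j) (M i) (M j)"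
    for N i j l
  proof -
    have i: "i \<in> {1,2,3}" and j: "j \<in> {1,2,3}" using pr3[OF ij] by auto
    note m0 = marg[OF MNC fo binary[OF i] binary[OF j] jm, of 0 l]
    note m1 = marg[OF MNC fo binary[OF i] binary[OF j] jm, of 1 l]
    have n: "0 \<le> \<xi> (N i j) l [x,y]" if "x \<in> {0,1}" "y \<in> {0,1}" for x y
      using bnd[of "[x,y]" "N i j" l] fo that by auto
    show ?thesis using m0 m1 n[of 0 0] n[of 0 1] n[of 1 0] n[of 1 1] a1[OF i, of l] a1[OF j, of l]
      by (simp add: a_def)
  qed
  have Ale: "3 * A N l \<le> 9 - g l"
    if h: "\<And>i j. (i,j) \<in> pairs3 \<Longrightarrow> Out (N i j) = ?F \<and> joint_meas Out p (N i j) (M i) (M j)"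
    for N l
  proof -
    have p12: "(1::nat,2::nat) \<in> pairs3" and p23: "(2::nat,3::nat) \<in> pairs3" and p31: "(3::nat,1::nat) \<in> pairs3"
      by (auto simp: pairs3_def)
    note q12 = pairb[of 1 2 N, OF p12 conjunct1[OF h[OF p12]] conjunct2[OF h[OF p12]], of l]
    note q23 = pairb[of 2 3 N, OF p23 conjunct1[OF h[OF p23]] conjunct2[OF h[OF p23]], of l]
    note q31 = pairb[of 3 1 N, OF p31 conjunct1[OF h[OF p31]] conjunct2[OF h[OF p31]], of l]
    have "3 * ((\<xi> (N 1 2) l [0,1] + \<xi> (N 1 2) l [1,0]) + (\<xi> (N 2 3) l [0,1] + \<xi> (N 2 3) l [1,0])
           + (\<xi> (N 3 1) l [0,1] + \<xi> (N 3 1) l [1,0]))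
          \<le> 9 - (\<bar>2*a 1 l-1\<bar> + \<bar>2*a 2 l-1\<bar> + \<bar>2*a 3 l-1\<bar>)"
      by (rule perlam) (use q12 q23 q31 a_bnd[of 1 l] a_bnd[of 2 l] a_bnd[of 3 l] in auto)
    then show ?thesis by (simp add: A_def g_def pairs3_def add.assoc)
  qed
  have A_bnd: "\<bar>A N l\<bar> \<le> 6"
    if h: "\<And>i j. (i,j) \<in> pairs3 \<Longrightarrow> Out (N i j) = ?F" for N l
  proof -
    have p12: "(1::nat,2::nat) \<in> pairs3" and p23: "(2::nat,3::nat) \<in> pairs3" and p31: "(3::nat,1::nat) \<in> pairs3"
      by (auto simp: pairs3_def)
    show ?thesis
      using bnd[of "[0,1]" "N 1 2" l] bnd[of "[1,0]" "N 1 2" l]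
        bnd[of "[0,1]" "N 2 3" l] bnd[of "[1,0]" "N 2 3" l]
        bnd[of "[0,1]" "N 3 1" l] bnd[of "[1,0]" "N 3 1" l]
        h[OF p12] h[OF p23] h[OF p31] F01 F10
      by (simp add: A_def pairs3_def)
  qed
  have panti: "p_anti p N q = (1/3) * measure_pmf.expectation (\<mu> q) (A N)"
    if h: "\<And>i j. (i,j) \<in> pairs3 \<Longrightarrow> Out (N i j) = ?F" for N q
  proof -
    have int2: "integrable (measure_pmf (\<mu> q)) (\<lambda>l. \<xi> (N i j) l X)"
      if "(i,j) \<in> pairs3" "X \<in> ?F" for i j X
      by (rule pmf_int_bound[where B=1]) (use bnd[of X "N i j"] h[OF that(1)] that(2) in auto)
    have "measure_pmf.expectation (\<mu> q) (A N) =
      (\<Sum>x\<in>pairs3. measure_pmf.expectation (\<mu> q) (\<lambda>l. case x of (i,j) \<Rightarrow> \<xi> (N i j) l [0,1] + \<xi> (N i j) l [1,0]))"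
      unfolding A_def
      by (rule Bochner_Integration.integral_sum[where f="\<lambda>x l. case x of (i,j) \<Rightarrow> \<xi> (N i j) l [0,1] + \<xi> (N i j) l [1,0]"])
         (auto intro!: Bochner_Integration.integrable_add int2 F01 F10)
    also have "\<dots> = (\<Sum>(i,j)\<in>pairs3. p (N i j) q [0,1] + p (N i j) q [1,0])"
    proof (rule sum.cong)
      fix x assume x: "x \<in> pairs3"
      obtain i j where xij: "x = (i,j)" by (cases x)
      have "measure_pmf.expectation (\<mu> q) (\<lambda>l. \<xi> (N i j) l [0,1] + \<xi> (N i j) l [1,0])
            = p (N i j) q [0,1] + p (N i j) q [1,0]"
        using x xij int2[of i j "[0,1]"] int2[of i j "[1,0]"] F01 F10 h[of i j]
        by (simp add: integral_add pE)
      then show "measure_pmf.expectation (\<mu> q) (\<lambda>l. case x of (i,j) \<Rightarrow> \<xi> (N i j) l [0,1] + \<xi> (N i j) l [1,0])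
          = (case x of (i,j) \<Rightarrow> p (N i j) q [0,1] + p (N i j) q [1,0])"
        by (simp add: xij)
    qed simp
    finally show ?thesis by (simp add: p_anti_def)
  qed
  have pred_le: "predictability p (M i) q \<le> measure_pmf.expectation (\<mu> q) (\<lambda>l. \<bar>2 * a i l - 1\<bar>)"
    if i: "i \<in> {1,2,3}" for i q
  proof -
    let ?e = "measure_pmf.expectation (\<mu> q) (a i)"
    have ab: "\<bar>a i l\<bar> \<le> 1" for l using a_bnd[OF i, of l] by auto
    have p0: "p (M i) q [0] = ?e" using pE[of "[0]" "M i" q] binary[OF i] by (simp add: a_def[abs_def])
    have "p (M i) q [1] = measure_pmf.expectation (\<mu> q) (\<lambda>l. 1 + (-1) * a i l)"
      using pE[of "[1]" "M i" q] binary[OF i] a1[OF i] by simp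
    also have "\<dots> = 1 - ?e" using pmf_exp_lin[OF ab, of "\<mu> q" 1 "-1"] by simp
    finally have p1: "p (M i) q [1] = 1 - ?e" .
    have u: "measure_pmf.expectation (\<mu> q) (\<lambda>l. (-1) + 2 * a i l) \<le> measure_pmf.expectation (\<mu> q) (\<lambda>l. \<bar>2 * a i l - 1\<bar>)"
      by (rule pmf_exp_mono[where B=3 and C=3]) (use a_bnd[OF i] in \<open>smt (verit)\<close>)+
    have v: "measure_pmf.expectation (\<mu> q) (\<lambda>l. 1 + (-2) * a i l) \<le> measure_pmf.expectation (\<mu> q) (\<lambda>l. \<bar>2 * a i l - 1\<bar>)"
      by (rule pmf_exp_mono[where B=3 and C=3]) (use a_bnd[OF i] in \<open>smt (verit)\<close>)+
    show ?thesis using u v pmf_exp_lin[OF ab, of "\<mu> q" "-1" 2] pmf_exp_lin[OF ab, of "\<mu> q" 1 "-2"] p0 p1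
      by (simp add: predictability_def max_def)
  qed
  define \<nu> where "\<nu> = \<mu> (Pave 0)"
  have nu_eq: "\<mu> (Pave x) = \<nu>" if "x \<in> {1,2,3}" for x
    using PNC ave_equiv[OF that] unfolding prep_noncontextual_def \<nu>_def by metis
  have mixE: "measure_pmf.expectation \<nu> f = (1/2) * measure_pmf.expectation (\<mu> (P x)) f + (1/2) * measure_pmf.expectation (\<mu> (Pp x)) f"
    if x: "x \<in> {0,1,2,3}" and fb: "\<And>l. \<bar>f l\<bar> \<le> B" for x and f :: "'l \<Rightarrow> real" and B
  proof -
    have "\<mu> (Pave x) = \<nu>" using x nu_eq by (auto simp: \<nu>_def)
    then show ?thesis using pmf_mix_exp[where f=f and B=B, OF fb model_mix[OF x]] by simp
  qed
  have gb: "\<bar>g l\<bar> \<le> 3" for l using g_bnd[of l] by auto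
  have Eg: "measure_pmf.expectation q g = (\<Sum>i\<in>{1,2,3::nat}. measure_pmf.expectation q (\<lambda>l. \<bar>2 * a i l - 1\<bar>))" for q
    unfolding g_def[abs_def]
    by (rule Bochner_Integration.integral_sum) (rule pmf_int_bound[where B=1], use b_bnd in auto)
  have eta_le: "eta_ave p M P Pp \<le> (1/3) * measure_pmf.expectation \<nu> g"
  proof -
    have "predictability p (M i) (P i) + predictability p (M i) (Pp i)
          \<le> 2 * measure_pmf.expectation \<nu> (\<lambda>l. \<bar>2 * a i l - 1\<bar>)" if i: "i \<in> {1,2,3}" for i
      using pred_le[OF i, of "P i"] pred_le[OF i, of "Pp i"] mixE[of i "\<lambda>l. \<bar>2 * a i l - 1\<bar>" 1] b_bnd[OF i] i
      by auto
    then have "(\<Sum>i\<in>{1,2,3::nat}. predictability p (M i) (P i) + predictability p (M i) (Pp i))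
          \<le> (\<Sum>i\<in>{1,2,3::nat}. 2 * measure_pmf.expectation \<nu> (\<lambda>l. \<bar>2 * a i l - 1\<bar>))"
      by (rule sum_mono)
    then show ?thesis unfolding eta_ave_def Eg by (simp add: sum_distrib_left[symmetric])
  qed
  have Eh: "measure_pmf.expectation q (A N) \<le> 3 - (1/3) * measure_pmf.expectation q g"
    if h: "\<And>i j. (i,j) \<in> pairs3 \<Longrightarrow> Out (N i j) = ?F \<and> joint_meas Out p (N i j) (M i) (M j)" for N q
  proof -
    have "measure_pmf.expectation q (A N) \<le> measure_pmf.expectation q (\<lambda>l. 3 + (-1/3) * g l)"
    proof (rule pmf_exp_mono[where B=6 and C=4])
      fix l
      show "\<bar>A N l\<bar> \<le> 6" using A_bnd[of N l] h by blast
      show "\<bar>3 + (-1/3) * g l\<bar> \<le> 4" using g_bnd[of l] by (simp add: abs_le_iff)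
      show "A N l \<le> 3 + (-1/3) * g l" using Ale[OF h, of l] by simp
    qed
    also have "\<dots> = 3 - (1/3) * measure_pmf.expectation q g" using pmf_exp_lin[OF gb, of q 3 "-1/3"] by simp
    finally show ?thesis .
  qed
  have G3: "measure_pmf.expectation q g \<le> 3" for q
  proof -
    have "measure_pmf.expectation q g \<le> measure_pmf.expectation q (\<lambda>l. 3 + 0 * g l)"
      by (rule pmf_exp_mono[where B=3 and C=3]) (use gb g_bnd in auto)
    then show ?thesis using pmf_exp_lin[OF gb, of q 3 0] by simp
  qed
  have hMj: "\<And>i j. (i,j) \<in> pairs3 \<Longrightarrow> Out (Mj i j) = ?F \<and> joint_meas Out p (Mj i j) (M i) (M j)"
    using four joint by blast
  have gmix: "measure_pmf.expectation \<nu> g = (1/2) * measure_pmf.expectation (\<mu> (P 0)) g + (1/2) * measure_pmf.expectation (\<mu> (Pp 0)) g"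
    using mixE[of 0 g 3] gb by simp
  have pa0: "p_anti p Mj (P 0) = (1/3) * measure_pmf.expectation (\<mu> (P 0)) (A Mj)"
    using panti[of Mj] four by blast
  have pa0p: "p_anti p Mj (Pp 0) = (1/3) * measure_pmf.expectation (\<mu> (Pp 0)) (A Mj)"
    using panti[of Mj] four by blast
  have E0: "measure_pmf.expectation (\<mu> (P 0)) (A Mj) \<le> 3 - (1/3) * measure_pmf.expectation (\<mu> (P 0)) g"
    using Eh[OF hMj] .
  have E0p: "measure_pmf.expectation (\<mu> (Pp 0)) (A Mj) \<le> 3 - (1/3) * measure_pmf.expectation (\<mu> (Pp 0)) g"
    using Eh[OF hMj] .
  have G3p: "measure_pmf.expectation (\<mu> (Pp 0)) g \<le> 3" by (rule G3)
  show ?thesis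
  proof (intro conjI impI)
    assume j': "\<forall>i j. (i,j) \<in> pairs3 \<longrightarrow> joint_meas Out p (Mj' i j) (M i) (M j)"
    have hMj': "\<And>i j. (i,j) \<in> pairs3 \<Longrightarrow> Out (Mj' i j) = ?F \<and> joint_meas Out p (Mj' i j) (M i) (M j)"
      using four' j' by blast
    have pa': "p_anti p Mj' (Pp 0) = (1/3) * measure_pmf.expectation (\<mu> (Pp 0)) (A Mj')"
      using panti[of Mj'] four' by blast
    have E0': "measure_pmf.expectation (\<mu> (Pp 0)) (A Mj') \<le> 3 - (1/3) * measure_pmf.expectation (\<mu> (Pp 0)) g"
      using Eh[OF hMj'] .
    show "p_anti p Mj (P 0) + p_anti p Mj' (Pp 0) \<le> 2 * (1 - 1 / 3 * eta_ave p M P Pp)"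
      using pa0 pa' E0 E0' eta_le gmix by (simp add: algebra_simps; linarith)
  next
    show "p_anti p Mj (P 0) + p_anti p Mj (Pp 0) \<le> 2 * (1 - 1 / 3 * eta_ave p M P Pp)"
      using pa0 pa0p E0 E0p eta_le gmix by (simp add: algebra_simps; linarith)
  next
    show "p_anti p Mj (P 0) \<le> 2 / 3 * (2 - eta_ave p M P Pp)"
      using pa0 E0 G3p eta_le gmix by (simp add: algebra_simps; linarith)
  qed
qed

end
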